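(* Let $n\ge1$ and $\mathcal{A},\mathcal{B}\subseteq D_n$. Suppose either ($I_0A_+=A_+$ and $I_0B_+=B_+$) or ($I_0A_-=A_-$ and $I_0B_-=B_-$). Then $\mathcal{A}$ and $\mathcal{B}$ are right-homometric if and only if they are left-homometric.
   Context: $D_n$ is the set of pairs $(k,\epsilon)$, $k\in\mathbb{Z}_n$, $\epsilon\in\{1,-1\}$, with multiplication $(k,\epsilon)(l,\eta)=(k+\epsilon l,\epsilon\eta)$. Right interval ${}^r\mathbf{int}(x,y)=x^{-1}y$, left interval ${}^l\mathbf{int}(x,y)=yx^{-1}$; ${}^{r}\mathbf{iv}(\mathcal{A})(g)=\#\{(x,y)\in\mathcal{A}^2:{}^r\mathbf{int}(x,y)=g\}$, similarly ${}^l\mathbf{iv}$; right-/left-homometric means equal ${}^r\mathbf{iv}$ / ${}^l\mathbf{iv}$. $A_+=\{k:(k,1)\in\mathcal{A}\}$, $A_-=\{k:(k,-1)\in\mathcal{A}\}$, similarly $B_\pm$. For $A\subseteq\mathbb{Z}_n$, $I_0A=\{-a:a\in A\}$. *)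

theory Defs
  imports Main
begin

text \<open>The dihedral group D_n: pairs (k, e) with k in Z_n (represented by 0..n-1)
  and e in {1, -1}; product (k,e)(l,h) = (k + e l mod n, e h).\<close>

definition Dn :: "nat \<Rightarrow> (int \<times> int) set" where
  "Dn n = {0..<int n} \<times> {1, -1}"

definition dmult :: "nat \<Rightarrow> int \<times> int \<Rightarrow> int \<times> int \<Rightarrow> int \<times> int" where
  "dmult n x y = ((fst x + snd x * fst y) mod int n, snd x * snd y)"

definition dinv :: "nat \<Rightarrow> int \<times> int \<Rightarrow> int \<times> int" where
  "dinv n x = ((- (snd x * fst x)) mod int n, snd x)"

definition rint :: "nat \<Rightarrow> int \<times> int \<Rightarrow> int \<times> int \<Rightarrow> int \<times> int" where
  "rint n x y = dmult n (dinv n x) y"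

definition lint :: "nat \<Rightarrow> int \<times> int \<Rightarrow> int \<times> int \<Rightarrow> int \<times> int" where
  "lint n x y = dmult n y (dinv n x)"

definition riv :: "nat \<Rightarrow> (int \<times> int) set \<Rightarrow> int \<times> int \<Rightarrow> nat" where
  "riv n A g = card {(x, y). x \<in> A \<and> y \<in> A \<and> rint n x y = g}"

definition liv :: "nat \<Rightarrow> (int \<times> int) set \<Rightarrow> int \<times> int \<Rightarrow> nat" where
  "liv n A g = card {(x, y). x \<in> A \<and> y \<in> A \<and> lint n x y = g}"

definition right_homometric :: "nat \<Rightarrow> (int \<times> int) set \<Rightarrow> (int \<times> int) set \<Rightarrow> bool" where
  "right_homometric n A B \<longleftrightarrow> riv n A = riv n B"

definition left_homometric :: "nat \<Rightarrow> (int \<times> int) set \<Rightarrow> (int \<times> int) set \<Rightarrow> bool" where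
  "left_homometric n A B \<longleftrightarrow> liv n A = liv n B"

definition plus_part :: "(int \<times> int) set \<Rightarrow> int set" where
  "plus_part A = {k. (k, 1) \<in> A}"

definition minus_part :: "(int \<times> int) set \<Rightarrow> int set" where
  "minus_part A = {k. (k, -1) \<in> A}"

definition I0 :: "nat \<Rightarrow> int set \<Rightarrow> int set" where
  "I0 n A = (\<lambda>a. (- a) mod int n) ` A"

end

theory Submission
  imports Defs
begin

lemma card_transfer:
  fixes f :: "(int \<times> int) \<times> (int \<times> int) \<Rightarrow> (int \<times> int) \<times> (int \<times> int)"
  assumes inv: "\<And>x y. x \<in> A \<Longrightarrow> y \<in> A \<Longrightarrow> fst (f (x,y)) \<in> A \<and> snd (f (x,y)) \<in> A \<and> f (f (x,y)) = (x,y)"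
    and rel: "\<And>x y. x \<in> A \<Longrightarrow> y \<in> A \<Longrightarrow> lint n (fst (f (x,y))) (snd (f (x,y))) = \<tau> (rint n x y)"
    and tinv: "\<And>g. \<tau> (\<tau> g) = g"
  shows "riv n A g = liv n A (\<tau> g)"
proof -
  let ?S = "{(x, y). x \<in> A \<and> y \<in> A \<and> rint n x y = g}"
  let ?T = "{(x, y). x \<in> A \<and> y \<in> A \<and> lint n x y = \<tau> g}"
  have rel2: "rint n (fst (f (x,y))) (snd (f (x,y))) = \<tau> (lint n x y)" if "x \<in> A" "y \<in> A" for x y
  proof -
    obtain x' y' where e: "f (x,y) = (x',y')" by (cases "f (x,y)")
    have "x' \<in> A" "y' \<in> A" "f (x',y') = (x,y)" using inv[OF that] e by auto
    then have "lint n x y = \<tau> (rint n x' y')" using rel[of x' y'] by simp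
    then show ?thesis using e tinv by simp
  qed
  have "bij_betw f ?S ?T"
  proof (rule bij_betw_byWitness[where f'=f])
    show "\<forall>a\<in>?S. f (f a) = a" using inv by auto
    show "\<forall>a\<in>?T. f (f a) = a" using inv by auto
    show "f ` ?S \<subseteq> ?T"
    proof
      fix q assume "q \<in> f ` ?S"
      then obtain x y where "x \<in> A" "y \<in> A" "rint n x y = g" "q = f (x,y)" by auto
      then show "q \<in> ?T" using inv[of x y] rel[of x y] by (cases q) auto
    qed
    show "f ` ?T \<subseteq> ?S"
    proof
      fix q assume "q \<in> f ` ?T"
      then obtain x y where "x \<in> A" "y \<in> A" "lint n x y = \<tau> g" "q = f (x,y)" by auto
      then show "q \<in> ?S" using inv[of x y] rel2[of x y] tinv[of g] by (cases q) auto
    qed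
  qed
  then show ?thesis unfolding riv_def liv_def by (rule bij_betw_same_card)
qed

definition fp :: "nat \<Rightarrow> (int \<times> int) \<times> (int \<times> int) \<Rightarrow> (int \<times> int) \<times> (int \<times> int)" where
  "fp n p = (let x = fst p; y = snd p in
     if snd x = 1 \<and> snd y = 1 then (x,y)
     else if snd x = -1 \<and> snd y = -1 then (y,x)
     else if snd x = 1 then (((- fst x) mod int n, 1), y)
     else (x, ((- fst y) mod int n, 1)))"

definition fm :: "nat \<Rightarrow> (int \<times> int) \<times> (int \<times> int) \<Rightarrow> (int \<times> int) \<times> (int \<times> int)" where
  "fm n p = (let x = fst p; y = snd p in
     if snd x = 1 \<and> snd y = 1 then (x,y)
     else if snd x = -1 \<and> snd y = -1 then (y,x)
     else if snd x = 1 then (x, ((- fst y) mod int n, -1))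
     else (((- fst x) mod int n, -1), y))"

definition tau :: "nat \<Rightarrow> int \<times> int \<Rightarrow> int \<times> int" where
  "tau n g = (if snd g = -1 \<and> 0 \<le> fst g \<and> fst g < int n then ((- fst g) mod int n, snd g) else g)"

lemma negneg: "0 \<le> a \<Longrightarrow> a < int n \<Longrightarrow> (- ((- a) mod int n)) mod int n = a"
  by (metis minus_minus mod_minus_eq mod_pos_pos_trivial)

lemma tau_inv: "tau n (tau n g) = g"
proof (cases "snd g = -1 \<and> 0 \<le> fst g \<and> fst g < int n")
  case True
  then have "n > 0" by auto
  then have "0 \<le> (- fst g) mod int n" "(- fst g) mod int n < int n" by auto
  then show ?thesis using True negneg[of "fst g" n] unfolding tau_def by (cases g) auto
qed (auto simp: tau_def)

lemma plus_case:
  assumes "A \<subseteq> Dn n" "I0 n (plus_part A) = plus_part A"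
  shows "riv n A g = liv n A g"
proof -
  have sym: "((- a) mod int n, 1) \<in> A" if "(a,1) \<in> A" for a
  proof -
    have "(- a) mod int n \<in> I0 n (plus_part A)" using that unfolding I0_def plus_part_def by auto
    then show ?thesis using assms(2) unfolding plus_part_def by auto
  qed
  have "riv n A g = liv n A (id g)"
  proof (rule card_transfer[where f="fp n"])
    fix x y assume x: "x \<in> A" and y: "y \<in> A"
    obtain a e where xa: "x = (a,e)" by (cases x)
    obtain b h where yb: "y = (b,h)" by (cases y)
    have ae: "0 \<le> a" "a < int n" "e = 1 \<or> e = -1" using x xa assms(1) unfolding Dn_def by auto
    have bh: "0 \<le> b" "b < int n" "h = 1 \<or> h = -1" using y yb assms(1) unfolding Dn_def by auto
    show "fst (fp n (x,y)) \<in> A \<and> snd (fp n (x,y)) \<in> A \<and> fp n (fp n (x,y)) = (x,y)"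
      using ae bh x y sym[of a] sym[of b] negneg[of a n] negneg[of b n] unfolding xa yb fp_def Let_def
      by auto
    show "lint n (fst (fp n (x,y))) (snd (fp n (x,y))) = id (rint n x y)"
      using ae bh unfolding xa yb fp_def Let_def lint_def rint_def dmult_def dinv_def
      by (auto simp: mod_simps algebra_simps)
  qed simp
  then show ?thesis by simp
qed

lemma minus_case:
  assumes "A \<subseteq> Dn n" "I0 n (minus_part A) = minus_part A"
  shows "riv n A g = liv n A (tau n g)"
proof -
  have sym: "((- a) mod int n, -1) \<in> A" if "(a,-1) \<in> A" for a
  proof -
    have "(- a) mod int n \<in> I0 n (minus_part A)" using that unfolding I0_def minus_part_def by auto
    then show ?thesis using assms(2) unfolding minus_part_def by auto
  qed
  show ?thesis
  proof (rule card_transfer[where f="fm n"])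
    fix x y assume x: "x \<in> A" and y: "y \<in> A"
    obtain a e where xa: "x = (a,e)" by (cases x)
    obtain b h where yb: "y = (b,h)" by (cases y)
    have ae: "0 \<le> a" "a < int n" "e = 1 \<or> e = -1" using x xa assms(1) unfolding Dn_def by auto
    have bh: "0 \<le> b" "b < int n" "h = 1 \<or> h = -1" using y yb assms(1) unfolding Dn_def by auto
    show "fst (fm n (x,y)) \<in> A \<and> snd (fm n (x,y)) \<in> A \<and> fm n (fm n (x,y)) = (x,y)"
      using ae bh x y sym[of a] sym[of b] negneg[of a n] negneg[of b n] unfolding xa yb fm_def Let_def
      by auto
    have n0: "n > 0" using ae by auto
    show "lint n (fst (fm n (x,y))) (snd (fm n (x,y))) = tau n (rint n x y)"
      using ae bh n0 unfolding xa yb fm_def Let_def lint_def rint_def dmult_def dinv_def tau_def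
      by (auto simp: mod_simps algebra_simps)
  qed (rule tau_inv)
qed

theorem mainTheorem9:
  fixes n :: nat and A B :: "(int \<times> int) set"
  assumes "n \<ge> 1"
    and "A \<subseteq> Dn n" and "B \<subseteq> Dn n"
    and "(I0 n (plus_part A) = plus_part A \<and> I0 n (plus_part B) = plus_part B)
       \<or> (I0 n (minus_part A) = minus_part A \<and> I0 n (minus_part B) = minus_part B)"
  shows "right_homometric n A B \<longleftrightarrow> left_homometric n A B"
  using assms(4)
proof
  assume h: "I0 n (plus_part A) = plus_part A \<and> I0 n (plus_part B) = plus_part B"
  have "riv n A = liv n A" "riv n B = liv n B"
    using plus_case[OF assms(2)] plus_case[OF assms(3)] h by auto
  then show ?thesis unfolding right_homometric_def left_homometric_def by simp
next
  assume h: "I0 n (minus_part A) = minus_part A \<and> I0 n (minus_part B) = minus_part B"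
  have a: "\<And>g. riv n A g = liv n A (tau n g)" and b: "\<And>g. riv n B g = liv n B (tau n g)"
    using minus_case[OF assms(2)] minus_case[OF assms(3)] h by auto
  show ?thesis unfolding right_homometric_def left_homometric_def
  proof
    assume "riv n A = riv n B"
    then have "liv n A (tau n (tau n g)) = liv n B (tau n (tau n g))" for g
      using a[of "tau n g"] b[of "tau n g"] by metis
    then show "liv n A = liv n B" by (auto simp: tau_inv)
  next
    assume "liv n A = liv n B"
    then show "riv n A = riv n B" using a b by auto
  qed
qed

end
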